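(* Let $q=4$, let $k>0$ be an even integer, and let $g=S_{k+1}^2+S_{2k}^{q^k+1}$. For every $a\in\mathbb{F}_{q^{3k}}$ with $\operatorname{Tr}_{q^{3k}/q^k}(a)\neq 0$, there exists $y\in\mathbb{F}_{q^k}$ such that $x\mapsto \operatorname{Tr}_{q^{3k}/2}\bigl(a\,g(x+y)-a\,g(x)\bigr)$ is a nonzero constant function on $\mathbb{F}_{q^{3k}}$.
   Context: For a prime power $q$ with characteristic $p$ and positive integer $m$, $S_m=x+x^q+\cdots+x^{q^{m-1}}\in\mathbb{F}_p[x]$. For fields $\mathbb{F}_{Q^n}\supseteq\mathbb{F}_Q$, $\operatorname{Tr}_{Q^n/Q}(z)=z+z^Q+\cdots+z^{Q^{n-1}}$ is the trace map. *)

theory Defs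
  imports Main
begin

definition S :: "nat \<Rightarrow> nat \<Rightarrow> 'a::comm_semiring_1 \<Rightarrow> 'a" where
  "S q m x = (\<Sum>i<m. x ^ (q ^ i))"

text \<open>Trace map Tr_{Q^n/Q}(z) = z + z^Q + ... + z^(Q^(n-1)).\<close>
definition tr :: "nat \<Rightarrow> nat \<Rightarrow> 'a::comm_semiring_1 \<Rightarrow> 'a" where
  "tr Q n z = (\<Sum>i<n. z ^ (Q ^ i))"

end

theory Submission
  imports Defs "HOL-Computational_Algebra.Polynomial"
begin

lemma sum_split_add: "(\<Sum>i<m+n. f i) = (\<Sum>i<m. f i) + (\<Sum>i<n. f (m + i))"
  for f :: "nat \<Rightarrow> 'a::comm_monoid_add"
  by (induction n) (auto simp: add.assoc)

lemma frob2:
  fixes x y :: "'a::field"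
  assumes "(2::'a) = 0"
  shows "(x + y) ^ (2 ^ n) = x ^ (2 ^ n) + y ^ (2 ^ n)"
proof (induction n)
  case 0 then show ?case by simp
next
  case (Suc n)
  have sq: "(u + v)^2 = u^2 + v^2" for u v :: 'a
  proof -
    have "(u+v)^2 = u^2 + v^2 + 2*u*v" by (simp add: power2_eq_square algebra_simps)
    then show ?thesis using assms by simp
  qed
  have "(x + y) ^ (2 ^ Suc n) = ((x+y)^(2^n))^2" by (simp add: power_mult[symmetric] mult.commute)
  also have "\<dots> = (x^(2^n))^2 + (y^(2^n))^2" using Suc sq by simp
  also have "\<dots> = x ^ (2 ^ Suc n) + y ^ (2 ^ Suc n)" by (simp add: power_mult[symmetric] mult.commute)
  finally show ?case .
qed

lemma frob4:
  fixes x y :: "'a::field"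
  assumes "(2::'a) = 0"
  shows "(x + y) ^ (4 ^ n) = x ^ (4 ^ n) + y ^ (4 ^ n)"
proof -
  have "(4::nat)^n = 2^(2*n)" by (simp add: power_mult)
  then show ?thesis using frob2[OF assms] by simp
qed

lemma frob2_sum:
  fixes f :: "'b \<Rightarrow> 'a::field"
  assumes "(2::'a) = 0"
  shows "(sum f A) ^ (2 ^ n) = (\<Sum>i\<in>A. f i ^ (2 ^ n))"
proof (induction A rule: infinite_finite_induct)
  case (insert x F) then show ?case using frob2[OF assms] by simp
qed auto

lemma frob4_sum:
  fixes f :: "'b \<Rightarrow> 'a::field"
  assumes "(2::'a) = 0"
  shows "(sum f A) ^ (4 ^ n) = (\<Sum>i\<in>A. f i ^ (4 ^ n))"
proof -
  have "(4::nat)^n = 2^(2*n)" by (simp add: power_mult)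
  then show ?thesis using frob2_sum[OF assms] by simp
qed

lemma char2:
  fixes k :: nat
  assumes fin: "finite (UNIV :: 'a::field set)"
    and card: "card (UNIV :: 'a set) = 4 ^ (3 * k)" and kpos: "k > 0"
  shows "(2::'a) = 0"
proof -
  have "(\<Sum>x\<in>(UNIV::'a set). x + 1) = (\<Sum>x\<in>UNIV. x)"
    by (rule sum.reindex_bij_witness[of _ "\<lambda>x. x - 1" "\<lambda>x. x + 1"]) auto
  then have "of_nat (card (UNIV::'a set)) = (0::'a)"
    by (simp add: sum.distrib)
  moreover have "(4::nat) ^ (3 * k) = 2 ^ (2 * (3 * k))"
    by (simp add: power_mult)
  moreover have "2 * (3 * k) = 6 * k" by simp
  ultimately have "of_nat (2 ^ (6 * k)) = (0::'a)" using card by simp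
  then have "(2::'a) ^ (6*k) = 0" by (simp only: of_nat_power of_nat_numeral)
  then show ?thesis by simp
qed


lemma fermat:
  fixes x :: "'a::field"
  assumes fin: "finite (UNIV :: 'a set)" and n: "card (UNIV :: 'a set) = n"
  shows "x ^ n = x"
proof -
  have npos: "n > 0" using fin n by (metis card_gt_0_iff UNIV_not_empty)
  show ?thesis
  proof (cases "x = 0")
    case True then show ?thesis using npos by simp
  next
    case False
    define U where "U = (UNIV :: 'a set) - {0}"
    have finU: "finite U" using fin U_def by simp
    have cU: "card U = n - 1" using n fin U_def by (simp add: card_Diff_singleton)
    have "(\<Prod>y\<in>U. x * y) = (\<Prod>y\<in>U. y)"
      by (rule prod.reindex_bij_witness[of _ "\<lambda>y. y / x" "\<lambda>y. x * y"]) (use False in \<open>auto simp: U_def\<close>)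
    then have "x ^ (n - 1) * (\<Prod>y\<in>U. y) = (\<Prod>y\<in>U. y)"
      by (simp add: prod.distrib cU)
    moreover have "(\<Prod>y\<in>U. y) \<noteq> 0" using finU by (simp add: U_def)
    ultimately have "x ^ (n - 1) = 1" by simp
    then have "x * x ^ (n - 1) = x" by simp
    then show ?thesis using npos by (metis power_eq_if not_gr0)
  qed
qed

lemma tr_nz:
  assumes fin: "finite (UNIV :: 'a::field set)" and n: "card (UNIV :: 'a set) = 2 ^ N"
    and Npos: "N > 0"
  shows "\<exists>x::'a. tr 2 N x \<noteq> 0"
proof (rule ccontr)
  assume H: "\<not> (\<exists>x::'a. tr 2 N x \<noteq> 0)"
  define p :: "'a poly" where "p = (\<Sum>i<N. monom 1 (2 ^ i))"
  have ev: "poly p x = tr 2 N x" for x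
    by (simp add: p_def tr_def poly_sum poly_monom)
  have deg: "degree p \<le> 2 ^ (N - 1)"
    unfolding p_def
  proof (rule degree_sum_le)
    fix i assume "i \<in> {..<N}"
    then have "(2::nat) ^ i \<le> 2 ^ (N - 1)" by (intro power_increasing) auto
    then show "degree (monom (1::'a) (2 ^ i)) \<le> 2 ^ (N - 1)"
      using degree_monom_le order_trans by blast
  qed simp
  have "coeff p (2 ^ (N - 1)) = (\<Sum>i<N. if i = N - 1 then 1 else 0)"
    by (simp add: p_def coeff_sum coeff_monom)
  also have "\<dots> = 1" using Npos by simp
  finally have "p \<noteq> 0" by auto
  then have "card {x. poly p x = 0} \<le> degree p" by (rule card_poly_roots_bound)
  moreover have "{x. poly p x = 0} = UNIV" using H ev by auto
  ultimately have "(2::nat) ^ N \<le> 2 ^ (N - 1)" using n deg by (metis le_trans)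
  moreover have "(2::nat) ^ (N - 1) < 2 ^ N" using Npos by simp
  ultimately show False by linarith
qed


lemma S_add:
  fixes x y :: "'a::field"
  assumes c2: "(2::'a) = 0"
  shows "S 4 m (x + y) = S 4 m x + S 4 m y"
  by (simp add: S_def frob4[OF c2] sum.distrib)

lemma pow_comm: "((z::'a::comm_semiring_1) ^ a) ^ b = (z ^ b) ^ a"
  by (simp add: power_mult[symmetric] mult.commute)

lemma S_pow4n:
  fixes z :: "'a::field"
  assumes c2: "(2::'a) = 0"
  shows "(S 4 m z) ^ (4 ^ n) = S 4 m (z ^ (4 ^ n))"
  unfolding S_def by (simp add: frob4_sum[OF c2] pow_comm)

lemma fix_shift:
  fixes y :: "'a::comm_semiring_1"
  assumes "y ^ (4 ^ k) = y"
  shows "y ^ (4 ^ (k + i)) = y ^ (4 ^ i)"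
proof -
  have "y ^ (4 ^ (k + i)) = (y ^ (4 ^ k)) ^ (4 ^ i)" by (simp add: power_add power_mult)
  then show ?thesis using assms by simp
qed

lemma M_zero:
  fixes y :: "'a::field"
  assumes c2: "(2::'a) = 0" and fy: "y ^ (4 ^ k) = y"
  shows "S 4 (2 * k) y = 0"
proof -
  have "S 4 (2 * k) y = S 4 (k + k) y" by (simp add: mult_2)
  also have "\<dots> = S 4 k y + (\<Sum>i<k. y ^ (4 ^ (k + i)))" by (simp add: S_def sum_split_add)
  also have "\<dots> = S 4 k y + S 4 k y" by (simp add: S_def fix_shift[OF fy])
  also have "\<dots> = 2 * S 4 k y" by simp
  finally show ?thesis using c2 by simp
qed

lemma L_eq:
  fixes y :: "'a::field"
  assumes fy: "y ^ (4 ^ k) = y"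
  shows "S 4 (k + 1) y = S 4 k y + y"
  using fy by (simp add: S_def)

lemma T_fix:
  fixes y :: "'a::field"
  assumes c2: "(2::'a) = 0" and fy: "y ^ (4 ^ k) = y"
  shows "(S 4 k y) ^ 4 = S 4 k y"
proof -
  have "(S 4 k y) ^ 4 = (S 4 k y) ^ (4 ^ 1)" by simp
  also have "\<dots> = S 4 k (y ^ (4 ^ 1))" by (rule S_pow4n[OF c2])
  also have "\<dots> = (\<Sum>i<k. y ^ (4 ^ Suc i))" by (simp add: S_def power_mult[symmetric] mult.commute)
  finally have e1: "(S 4 k y) ^ 4 = (\<Sum>i<k. y ^ (4 ^ Suc i))" .
  have "(\<Sum>i<Suc k. y ^ (4 ^ i)) = y ^ (4 ^ 0) + (\<Sum>i<k. y ^ (4 ^ Suc i))"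
    by (rule sum.lessThan_Suc_shift)
  moreover have "(\<Sum>i<Suc k. y ^ (4 ^ i)) = (\<Sum>i<k. y ^ (4 ^ i)) + y ^ (4 ^ k)" by simp
  ultimately have "(\<Sum>i<k. y ^ (4 ^ Suc i)) = (\<Sum>i<k. y ^ (4 ^ i))" using fy by simp
  then show ?thesis using e1 by (simp add: S_def)
qed

lemma TT_zero:
  fixes y :: "'a::field"
  assumes c2: "(2::'a) = 0" and fy: "y ^ (4 ^ k) = y" and ev: "even k"
  shows "S 4 k (S 4 k y) = 0"
proof -
  define t where "t = S 4 k y"
  have t4: "t ^ 4 = t" using T_fix[OF c2 fy] t_def by simp
  have ti: "t ^ (4 ^ i) = t" for i
  proof (induction i)
    case (Suc i)
    have "t ^ (4 ^ Suc i) = (t ^ (4 ^ i)) ^ 4" by (simp add: power_mult[symmetric] mult.commute)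
    then show ?case using Suc t4 by simp
  qed simp
  have "S 4 k t = of_nat k * t" by (simp add: S_def ti)
  moreover obtain j where "k = 2 * j" using ev by blast
  ultimately have "S 4 k t = 2 * of_nat j * t" by simp
  then show ?thesis using c2 t_def by simp
qed

lemma L_inv:
  fixes z :: "'a::field"
  assumes c2: "(2::'a) = 0" and fz: "z ^ (4 ^ k) = z" and ev: "even k"
  shows "S 4 (k + 1) (S 4 (k + 1) z) = z"
proof -
  have fL: "(S 4 (k + 1) z) ^ (4 ^ k) = S 4 (k + 1) z"
    using S_pow4n[OF c2] fz by simp
  have "S 4 (k + 1) (S 4 (k + 1) z) = S 4 k (S 4 (k + 1) z) + S 4 (k + 1) z"
    by (rule L_eq[OF fL])
  also have "\<dots> = S 4 k (S 4 k z + z) + (S 4 k z + z)" using L_eq[OF fz] by simp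
  also have "\<dots> = S 4 k (S 4 k z) + 2 * S 4 k z + z" by (simp add: S_add[OF c2])
  also have "\<dots> = z" using TT_zero[OF c2 fz ev] c2 by simp
  finally show ?thesis .
qed

lemma tr3_eq:
  fixes a :: "'a::comm_semiring_1"
  shows "tr Q 3 a = a + a ^ Q + (a ^ Q) ^ Q"
  by (simp add: tr_def eval_nat_numeral power_mult[symmetric] mult.commute)

lemma trQ_fix:
  fixes a :: "'a::field"
  assumes c2: "(2::'a) = 0" and ferm: "\<And>x::'a. x ^ (4 ^ (3 * k)) = x"
  shows "(tr (4 ^ k) 3 a) ^ (4 ^ k) = tr (4 ^ k) 3 a"
proof -
  have "((a ^ (4 ^ k)) ^ (4 ^ k)) ^ (4 ^ k) = a ^ (4 ^ (3 * k))"
    by (simp add: power_mult[symmetric] power_add[symmetric] eval_nat_numeral add.assoc)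
  then have "((a ^ (4 ^ k)) ^ (4 ^ k)) ^ (4 ^ k) = a" using ferm by simp
  then show ?thesis by (simp add: tr3_eq frob4[OF c2] add_ac)
qed

lemma pow2_shift:
  fixes u :: "'a::comm_semiring_1"
  shows "u ^ (2 ^ (2 * k + j)) = (u ^ (4 ^ k)) ^ (2 ^ j)"
proof -
  have "(2::nat) ^ (2 * k + j) = 4 ^ k * 2 ^ j" by (simp add: power_add power_mult)
  then show ?thesis by (simp add: power_mult)
qed

lemma G:
  fixes a w :: "'a::field"
  assumes c2: "(2::'a) = 0" and fw: "w ^ (4 ^ k) = w"
  shows "tr 2 (6 * k) (a * w) = tr 2 (2 * k) (tr (4 ^ k) 3 a * w)"
proof -
  define Q where "Q = (4::nat) ^ k"
  have "tr 2 (6 * k) (a * w) = tr 2 (2 * k + 2 * k + 2 * k) (a * w)" by simp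
  also have "\<dots> = (\<Sum>j<2*k. (a*w) ^ (2 ^ j)) + (\<Sum>j<2*k. (a*w) ^ (2 ^ (2*k + j)))
      + (\<Sum>j<2*k. (a*w) ^ (2 ^ (2*k + (2*k + j))))"
    unfolding tr_def sum_split_add by (simp add: add.assoc)
  also have "\<dots> = (\<Sum>j<2*k. (a*w) ^ (2 ^ j)) + (\<Sum>j<2*k. (a^Q*w) ^ (2 ^ j))
      + (\<Sum>j<2*k. ((a^Q)^Q*w) ^ (2 ^ j))"
    by (simp only: pow2_shift power_mult_distrib fw Q_def)
  also have "\<dots> = (\<Sum>j<2*k. (a*w + a^Q*w + (a^Q)^Q*w) ^ (2 ^ j))"
    by (simp add: sum.distrib frob2[OF c2])
  also have "\<dots> = tr 2 (2 * k) ((a + a^Q + (a^Q)^Q) * w)"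
    by (simp add: tr_def distrib_right)
  also have "\<dots> = tr 2 (2 * k) (tr (4 ^ k) 3 a * w)"
    by (simp only: tr3_eq Q_def)
  finally show ?thesis .
qed


lemma arith_lem: "(a::'a::field) * (P + Z + B) - a * (P + B) = a * Z"
  by (simp add: algebra_simps)

theorem mainTheorem2:
  fixes k :: nat and g :: "'a::field \<Rightarrow> 'a"
  assumes fin: "finite (UNIV :: 'a set)"
    and card: "card (UNIV :: 'a set) = 4 ^ (3 * k)"
    and kpos: "k > 0" and keven: "even k"
    and g_def: "\<And>x. g x = (S 4 (k + 1) x) ^ 2 + (S 4 (2 * k) x) ^ (4 ^ k + 1)"
  shows "\<forall>a :: 'a. tr (4 ^ k) 3 a \<noteq> 0 \<longrightarrow>
           (\<exists>y :: 'a. y ^ (4 ^ k) = y \<and>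
              (\<exists>c :: 'a. c \<noteq> 0 \<and>
                 (\<forall>x :: 'a. tr 2 (6 * k) (a * g (x + y) - a * g x) = c)))"
proof (intro allI impI)
  fix a :: 'a
  assume bnz: "tr (4 ^ k) 3 a \<noteq> 0"
  define b where "b = tr (4 ^ k) 3 a"
  have c2: "(2::'a) = 0" by (rule char2[OF fin card kpos])
  have ferm: "\<And>x::'a. x ^ (4 ^ (3 * k)) = x" by (rule fermat[OF fin card])
  have card2: "card (UNIV :: 'a set) = 2 ^ (6 * k)"
  proof -
    have "(4::nat) ^ (3 * k) = 2 ^ (2 * (3 * k))" by (simp add: power_mult)
    then show ?thesis using card by simp
  qed
  obtain x0 :: 'a where x0: "tr 2 (6 * k) x0 \<noteq> 0"
    using tr_nz[OF fin card2] kpos by auto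
  define u where "u = tr (4 ^ k) 3 x0"
  have fu: "u ^ (4 ^ k) = u" unfolding u_def by (rule trQ_fix[OF c2 ferm])
  have fb: "b ^ (4 ^ k) = b" unfolding b_def by (rule trQ_fix[OF c2 ferm])
  have "tr 2 (6 * k) (x0 * 1) = tr 2 (2 * k) (u * 1)"
    unfolding u_def by (rule G[OF c2]) simp
  then have unz: "tr 2 (2 * k) u \<noteq> 0" using x0 by simp
  define w where "w = u / b"
  have fw: "w ^ (4 ^ k) = w" unfolding w_def using fu fb by (simp add: power_divide)
  define z where "z = w ^ (2 ^ (2 * k - 1))"
  have fz: "z ^ (4 ^ k) = z" unfolding z_def
    by (simp only: pow_comm[of w "2 ^ (2 * k - 1)" "4 ^ k"] fw)
  have "(2::nat) * 2 ^ (2 * k - 1) = 2 ^ Suc (2 * k - 1)" by simp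
  also have "Suc (2 * k - 1) = 2 * k" using kpos by simp
  also have "(2::nat) ^ (2 * k) = 4 ^ k" by (simp add: power_mult)
  finally have e: "(2::nat) * 2 ^ (2 * k - 1) = 4 ^ k" .
  have "z ^ 2 = w ^ (2 * 2 ^ (2 * k - 1))" unfolding z_def
    by (simp only: power_mult[symmetric] mult.commute)
  then have z2: "z ^ 2 = w" using e fw by simp
  define y where "y = S 4 (k + 1) z"
  have fy: "y ^ (4 ^ k) = y" unfolding y_def using S_pow4n[OF c2] fz by simp
  have Ly: "S 4 (k + 1) y = z" unfolding y_def by (rule L_inv[OF c2 fz keven])
  have My: "S 4 (2 * k) y = 0" by (rule M_zero[OF c2 fy])
  have diff: "a * g (x + y) - a * g x = a * w" for x
  proof -
    define A where "A = S 4 (k + 1) x"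
    define B where "B = (S 4 (2 * k) x) ^ (4 ^ k + 1)"
    have e1: "S 4 (k + 1) (x + y) = A + z" unfolding A_def using S_add[OF c2] Ly by simp
    have e2: "S 4 (2 * k) (x + y) = S 4 (2 * k) x" using S_add[OF c2] My by simp
    have e3: "(A + z) ^ 2 = A ^ 2 + z ^ 2" using frob2[OF c2, of A z 1] by simp
    have "g (x + y) = A ^ 2 + z ^ 2 + B" unfolding B_def by (simp only: g_def e1 e2 e3)
    moreover have "g x = A ^ 2 + B" unfolding A_def B_def by (rule g_def)
    ultimately show ?thesis using z2 by (simp only: arith_lem)
  qed
  have "tr 2 (6 * k) (a * w) = tr 2 (2 * k) (b * w)" unfolding b_def by (rule G[OF c2 fw])
  also have "b * w = u" using bnz unfolding w_def b_def by simp
  finally have key: "tr 2 (6 * k) (a * w) \<noteq> 0" using unz by simp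
  show "\<exists>y :: 'a. y ^ (4 ^ k) = y \<and>
              (\<exists>c :: 'a. c \<noteq> 0 \<and>
                 (\<forall>x :: 'a. tr 2 (6 * k) (a * g (x + y) - a * g x) = c))"
  proof (intro exI conjI allI)
    show "y ^ (4 ^ k) = y" by (rule fy)
    show "tr 2 (6 * k) (a * w) \<noteq> 0" by (rule key)
    fix x
    show "tr 2 (6 * k) (a * g (x + y) - a * g x) = tr 2 (6 * k) (a * w)"
      by (simp only: diff)
  qed
qed

end
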